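(* If $P\subset\mathbb R^d$ is a rational $d$-polytope with $N(P)=-N(P)$, then $\Lambda_P=\Delta_P$, i.e. every upper region of $\Lambda_P$ is an open cell of $\Delta_P$ and conversely.
   Context: A rational $d$-polytope has a unique irredundant presentation $P=\bigcap_{i=1}^m\{\bm x:(\bm a_i,\bm x)\ge b_i\}$ with $(\bm a_i,b_i)\in\mathbb Z^{d+1}$ primitive; $N(P)=\{\bm a_1,\dots,\bm a_m\}$. Upper regions: nonempty sets $U_{\bm c}=\{\bm x: c_i-1<(\bm a_i,\bm x)\le c_i\ \forall i\}$, $\bm c\in\mathbb Z^m$; $\Lambda_P$ is the set of them. $\Delta_P$: the open cells of the arrangement $\{(\bm a_i,\bm x)=k: i\le m, k\in\mathbb Z\}$, i.e. nonempty sets $A_1\cap\cdots\cap A_m$ with each $A_i$ either $\{(\bm a_i,\bm x)=k\}$ or $\{k<(\bm a_i,\bm x)<k+1\}$, $k\in\mathbb Z$. *)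

theory Defs
  imports "HOL-Analysis.Analysis"
begin

definition rvec :: "int^'n \<Rightarrow> real^'n" where
  "rvec v = (\<chi> j. real_of_int (v $ j))"

definition primitive_pair :: "int^'n \<Rightarrow> int \<Rightarrow> bool" where
  "primitive_pair a b \<longleftrightarrow> (\<forall>k::int. (\<forall>j. k dvd a $ j) \<and> k dvd b \<longrightarrow> \<bar>k\<bar> = 1)"

definition irredundant_presentation ::
  "(real^'n) set \<Rightarrow> nat \<Rightarrow> (nat \<Rightarrow> int^'n) \<Rightarrow> (nat \<Rightarrow> int) \<Rightarrow> bool" where
  "irredundant_presentation P m a b \<longleftrightarrow>
     P = {x. \<forall>i<m. rvec (a i) \<bullet> x \<ge> real_of_int (b i)} \<and>
     (\<forall>i<m. primitive_pair (a i) (b i)) \<and>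
     (\<forall>j<m. {x. \<forall>i<m. i \<noteq> j \<longrightarrow> rvec (a i) \<bullet> x \<ge> real_of_int (b i)} \<noteq> P)"

definition rational_polytope_pres ::
  "(real^'n) set \<Rightarrow> nat \<Rightarrow> (nat \<Rightarrow> int^'n) \<Rightarrow> (nat \<Rightarrow> int) \<Rightarrow> bool" where
  "rational_polytope_pres P m a b \<longleftrightarrow>
     irredundant_presentation P m a b \<and> bounded P \<and> aff_dim P = int CARD('n)"

definition normals :: "nat \<Rightarrow> (nat \<Rightarrow> int^'n) \<Rightarrow> (int^'n) set" where
  "normals m a = a ` {..<m}"

text \<open>Upper regions U_c, c in Z^m (only c_0..c_(m-1) matter).\<close>
definition upper_region :: "nat \<Rightarrow> (nat \<Rightarrow> int^'n) \<Rightarrow> (nat \<Rightarrow> int) \<Rightarrow> (real^'n) set" where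
  "upper_region m a c =
     {x. \<forall>i<m. real_of_int (c i) - 1 < rvec (a i) \<bullet> x \<and> rvec (a i) \<bullet> x \<le> real_of_int (c i)}"

definition Lambda_P :: "nat \<Rightarrow> (nat \<Rightarrow> int^'n) \<Rightarrow> (real^'n) set set" where
  "Lambda_P m a = {U. \<exists>c. U = upper_region m a c \<and> U \<noteq> {}}"

definition arr_cell :: "nat \<Rightarrow> (nat \<Rightarrow> int^'n) \<Rightarrow> (nat \<Rightarrow> bool) \<Rightarrow> (nat \<Rightarrow> int) \<Rightarrow> (real^'n) set" where
  "arr_cell m a e k =
     {x. \<forall>i<m. (if e i then rvec (a i) \<bullet> x = real_of_int (k i)
                else real_of_int (k i) < rvec (a i) \<bullet> x \<and> rvec (a i) \<bullet> x < real_of_int (k i) + 1)}"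

definition Delta_P :: "nat \<Rightarrow> (nat \<Rightarrow> int^'n) \<Rightarrow> (real^'n) set set" where
  "Delta_P m a = {A. \<exists>e k. A = arr_cell m a e k \<and> A \<noteq> {}}"

end

theory Submission
  imports Defs
begin

lemma rvec_uminus: "rvec (- v) = - rvec v"
  by (simp add: rvec_def vec_eq_iff)

lemma inner_neg_a: "rvec (- v) \<bullet> x = - (rvec v \<bullet> x)"
  by (simp add: rvec_uminus)

lemma L1:
  fixes ci cj :: int and t :: real
  assumes "real_of_int ci - 1 < t" "t \<le> real_of_int ci"
    "real_of_int cj - 1 < - t" "- t \<le> real_of_int cj"
  shows "(ci + cj = 0 \<and> t = real_of_int ci) \<or> (ci + cj \<noteq> 0 \<and> real_of_int ci - 1 < t \<and> t < real_of_int ci)"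
proof -
  have "real_of_int (ci + cj) \<ge> 0" using assms by simp
  hence a: "ci + cj \<ge> 0" by linarith
  have "real_of_int (ci + cj) < 2" using assms by simp
  hence b: "ci + cj < 2" by linarith
  show ?thesis
  proof (cases "ci + cj = 0")
    case True
    hence "cj = - ci" by linarith
    hence "real_of_int cj = - real_of_int ci" by simp
    then show ?thesis using True assms by auto
  next
    case False
    hence "ci + cj = 1" using a b by linarith
    hence "cj = 1 - ci" by linarith
    hence "real_of_int cj = 1 - real_of_int ci" by simp
    then show ?thesis using False assms by auto
  qed
qed

lemma L2:
  fixes ki kj :: int and t t0 :: real
  assumes c0i: "if ei then t0 = real_of_int ki else real_of_int ki < t0 \<and> t0 < real_of_int ki + 1"
    and c0j: "if ej then - t0 = real_of_int kj else real_of_int kj < - t0 \<and> - t0 < real_of_int kj + 1"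
    and ui: "real_of_int (if ei then ki else ki + 1) - 1 < t" "t \<le> real_of_int (if ei then ki else ki + 1)"
    and uj: "real_of_int (if ej then kj else kj + 1) - 1 < - t" "- t \<le> real_of_int (if ej then kj else kj + 1)"
  shows "if ei then t = real_of_int ki else real_of_int ki < t \<and> t < real_of_int ki + 1"
proof (cases ei)
  case True
  have h1: "t0 = real_of_int ki" "t \<le> real_of_int ki" using c0i ui(2) True by simp_all
  show ?thesis
  proof (cases ej)
    case True
    have "- t0 = real_of_int kj" "- t \<le> real_of_int kj" using c0j uj(2) True by simp_all
    hence "t = real_of_int ki" using h1 by linarith
    then show ?thesis using \<open>ei\<close> by simp
  next
    case False
    have "real_of_int kj < - t0" "- t0 < real_of_int kj + 1" using c0j False by simp_all
    hence "real_of_int kj < - real_of_int ki" "- real_of_int ki < real_of_int kj + 1"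
      using h1 by linarith+
    hence "kj < - ki" "- ki < kj + 1" by linarith+
    hence False by linarith
    then show ?thesis ..
  qed
next
  case False
  have h1: "real_of_int ki < t0" "t0 < real_of_int ki + 1"
    "real_of_int ki < t" "t \<le> real_of_int ki + 1" using c0i ui False by simp_all
  show ?thesis
  proof (cases ej)
    case True
    have "- t0 = real_of_int kj" using c0j True by simp
    hence "real_of_int ki < - real_of_int kj" "- real_of_int kj < real_of_int ki + 1"
      using h1 by linarith+
    hence "ki < - kj" "- kj < ki + 1" by linarith+
    hence False by linarith
    then show ?thesis ..
  next
    case F2: False
    have h2: "real_of_int kj < - t0" "- t0 < real_of_int kj + 1"
       "real_of_int kj < - t" using c0j uj(1) F2 by simp_all
    have "real_of_int (kj + ki) < 0" "real_of_int (kj + ki) > -2" using h1 h2 by simp_all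
    hence "kj + ki < 0" "kj + ki > -2" by linarith+
    hence "kj = - ki - 1" by linarith
    hence "real_of_int kj = - real_of_int ki - 1" by simp
    hence "t < real_of_int ki + 1" using h2 by linarith
    then show ?thesis using h1 False by simp
  qed
qed

lemma UR: "x \<in> upper_region m a c \<Longrightarrow> i < m \<Longrightarrow>
  real_of_int (c i) - 1 < rvec (a i) \<bullet> x \<and> rvec (a i) \<bullet> x \<le> real_of_int (c i)"
  unfolding upper_region_def by blast

lemma AC: "x \<in> arr_cell m a e k \<Longrightarrow> i < m \<Longrightarrow>
  (if e i then rvec (a i) \<bullet> x = real_of_int (k i)
                else real_of_int (k i) < rvec (a i) \<bullet> x \<and> rvec (a i) \<bullet> x < real_of_int (k i) + 1)"
  unfolding arr_cell_def by blast

theorem mainTheorem6: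
  fixes P :: "(real^'n) set" and m :: nat and a :: "nat \<Rightarrow> int^'n" and b :: "nat \<Rightarrow> int"
  assumes "rational_polytope_pres P m a b"
    and "normals m a = uminus ` normals m a"
  shows "Lambda_P m a = Delta_P m a"
proof -
  have "\<forall>i. \<exists>j. i < m \<longrightarrow> j < m \<and> a j = - a i"
  proof
    fix i
    show "\<exists>j. i < m \<longrightarrow> j < m \<and> a j = - a i"
    proof (cases "i < m")
      case True
      hence "a i \<in> uminus ` normals m a" using assms(2) by (simp add: normals_def)
      then obtain j where "j < m" "a i = - a j" by (auto simp: normals_def)
      then show ?thesis by auto
    qed auto
  qed
  then obtain J where J: "\<And>i. i < m \<Longrightarrow> J i < m \<and> a (J i) = - a i" by metis
  show ?thesis
  proof
    show "Lambda_P m a \<subseteq> Delta_P m a"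
    proof
      fix U assume "U \<in> Lambda_P m a"
      then obtain c where U: "U = upper_region m a c" "U \<noteq> {}" by (auto simp: Lambda_P_def)
      define e where "e i = (c i + c (J i) = 0)" for i
      define k where "k i = (if e i then c i else c i - 1)" for i
      have "upper_region m a c = arr_cell m a e k"
      proof (intro set_eqI iffI)
        fix x assume x: "x \<in> upper_region m a c"
        show "x \<in> arr_cell m a e k"
          unfolding arr_cell_def
        proof (intro CollectI allI impI)
          fix i assume i: "i < m"
          have Ji: "J i < m" "a (J i) = - a i" using J i by auto
          have "real_of_int (c (J i)) - 1 < rvec (a (J i)) \<bullet> x" "rvec (a (J i)) \<bullet> x \<le> real_of_int (c (J i))"
            using UR[OF x Ji(1)] by auto
          hence "real_of_int (c (J i)) - 1 < - (rvec (a i) \<bullet> x)" "- (rvec (a i) \<bullet> x) \<le> real_of_int (c (J i))"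
            unfolding Ji(2) inner_neg_a .
          moreover have "real_of_int (c i) - 1 < rvec (a i) \<bullet> x" "rvec (a i) \<bullet> x \<le> real_of_int (c i)"
            using UR[OF x i] by auto
          ultimately have "(c i + c (J i) = 0 \<and> rvec (a i) \<bullet> x = real_of_int (c i)) \<or> (c i + c (J i) \<noteq> 0 \<and> real_of_int (c i) - 1 < rvec (a i) \<bullet> x \<and> rvec (a i) \<bullet> x < real_of_int (c i))"
            by (intro L1)
          then show "if e i then rvec (a i) \<bullet> x = real_of_int (k i)
                else real_of_int (k i) < rvec (a i) \<bullet> x \<and> rvec (a i) \<bullet> x < real_of_int (k i) + 1"
            by (auto simp: e_def k_def)
        qed
      next
        fix x assume x: "x \<in> arr_cell m a e k"
        show "x \<in> upper_region m a c"
          unfolding upper_region_def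
        proof (intro CollectI allI impI)
          fix i assume i: "i < m"
          have "if e i then rvec (a i) \<bullet> x = real_of_int (k i)
                else real_of_int (k i) < rvec (a i) \<bullet> x \<and> rvec (a i) \<bullet> x < real_of_int (k i) + 1"
            using AC[OF x i] .
          then show "real_of_int (c i) - 1 < rvec (a i) \<bullet> x \<and> rvec (a i) \<bullet> x \<le> real_of_int (c i)"
            by (auto simp: k_def split: if_splits)
        qed
      qed
      then show "U \<in> Delta_P m a" using U by (auto simp: Delta_P_def)
    qed
  next
    show "Delta_P m a \<subseteq> Lambda_P m a"
    proof
      fix A assume "A \<in> Delta_P m a"
      then obtain e k where A: "A = arr_cell m a e k" "A \<noteq> {}" by (auto simp: Delta_P_def)
      then obtain x0 where x0: "x0 \<in> arr_cell m a e k" by auto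
      define c where "c i = (if e i then k i else k i + 1)" for i
      have "arr_cell m a e k = upper_region m a c"
      proof (intro set_eqI iffI)
        fix x assume x: "x \<in> arr_cell m a e k"
        show "x \<in> upper_region m a c"
          unfolding upper_region_def
        proof (intro CollectI allI impI)
          fix i assume i: "i < m"
          have "if e i then rvec (a i) \<bullet> x = real_of_int (k i)
                else real_of_int (k i) < rvec (a i) \<bullet> x \<and> rvec (a i) \<bullet> x < real_of_int (k i) + 1"
            using AC[OF x i] .
          then show "real_of_int (c i) - 1 < rvec (a i) \<bullet> x \<and> rvec (a i) \<bullet> x \<le> real_of_int (c i)"
            by (auto simp: c_def split: if_splits)
        qed
      next
        fix x assume x: "x \<in> upper_region m a c"
        show "x \<in> arr_cell m a e k"
          unfolding arr_cell_def
        proof (intro CollectI allI impI)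
          fix i assume i: "i < m"
          have Ji: "J i < m" "a (J i) = - a i" using J i by auto
          have c0i: "if e i then rvec (a i) \<bullet> x0 = real_of_int (k i)
                else real_of_int (k i) < rvec (a i) \<bullet> x0 \<and> rvec (a i) \<bullet> x0 < real_of_int (k i) + 1"
            using AC[OF x0 i] .
          have eqJ: "\<And>y. rvec (a (J i)) \<bullet> y = - (rvec (a i) \<bullet> y)" using Ji by (simp add: inner_neg_a)
          have c0j': "if e (J i) then rvec (a (J i)) \<bullet> x0 = real_of_int (k (J i))
                else real_of_int (k (J i)) < rvec (a (J i)) \<bullet> x0 \<and> rvec (a (J i)) \<bullet> x0 < real_of_int (k (J i)) + 1"
            using AC[OF x0 Ji(1)] .
          have c0j: "if e (J i) then - (rvec (a i) \<bullet> x0) = real_of_int (k (J i))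
                else real_of_int (k (J i)) < - (rvec (a i) \<bullet> x0) \<and> - (rvec (a i) \<bullet> x0) < real_of_int (k (J i)) + 1"
            using c0j' unfolding eqJ .
          have ui: "real_of_int (if e i then k i else k i + 1) - 1 < rvec (a i) \<bullet> x"
               "rvec (a i) \<bullet> x \<le> real_of_int (if e i then k i else k i + 1)"
            using UR[OF x i] unfolding c_def by auto
          have uj': "real_of_int (c (J i)) - 1 < rvec (a (J i)) \<bullet> x"
               "rvec (a (J i)) \<bullet> x \<le> real_of_int (c (J i))"
            using UR[OF x Ji(1)] by auto
          have uj: "real_of_int (if e (J i) then k (J i) else k (J i) + 1) - 1 < - (rvec (a i) \<bullet> x)"
               "- (rvec (a i) \<bullet> x) \<le> real_of_int (if e (J i) then k (J i) else k (J i) + 1)"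
            using uj' unfolding eqJ c_def .
          show "if e i then rvec (a i) \<bullet> x = real_of_int (k i)
                else real_of_int (k i) < rvec (a i) \<bullet> x \<and> rvec (a i) \<bullet> x < real_of_int (k i) + 1"
            by (rule L2[OF c0i c0j ui uj])
        qed
      qed
      then show "A \<in> Lambda_P m a" using A by (auto simp: Lambda_P_def)
    qed
  qed
qed

end
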